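(* Let $\mathbb{E}$ be a field with $p=\mathrm{char}(\mathbb{E})$, let $m>1$ with $\gcd(m,p)=1$ if $p>0$, and let $s_0,\ldots,s_{m-1}$ be an enumeration of a subgroup $M$ of $\mathbb{E}^*$ of size $m$ such that $\phi_{p,m}(x)$ divides $\tilde{s}(x)=s_0x^{m-1}+s_1x^{m-2}+\cdots+s_{m-1}$. Let $f(x)=(x^m-1)/\gcd(x^m-1,\tilde{s}(x))$. Then the sequence obtained by extending $s_0,\ldots,s_{m-1}$ periodically with period $m$ is an $f$-sequence presenting $M$, and $f$ divides $(x^m-1)/\big((x-1)\phi_{p,m}(x)\big)$; that is, $M$ is an automatically non-standard $f$-subgroup.
   Context: $\phi_{p,m}(x)$ is the $m$th cyclotomic polynomial $\phi_m(x)\in\mathbb{Z}[x]$ (defined by $x^m-1=\prod_{d\mid m}\phi_d(x)$), reduced modulo $p$ if $p>0$; when $\gcd(m,p)=1$ its zeros are exactly the primitive $m$th roots of unity. An $f$-sequence is a two-way infinite sequence with $f(\sigma)s=0$, $(\sigma s)_n=s_{n+1}$. A sequence $s$ presents a finite subgroup $M$ if $s$ has smallest period $|M|$ and $M=\{s_0,\ldots,s_{|M|-1}\}$. Definition: for a field $\mathbb{F}$ of characteristic $p$ and $m>1$ with $\gcd(m,p)=1$ if $p>0$, if $f\in\mathbb{F}[x]$ divides $(x^m-1)/((x-1)\phi_{p,m}(x))$ and an $f$-sequence $s$ (over an extension of $\mathbb{F}$) of period $m$ has $M=\{s_0,\ldots,s_{m-1}\}$ a subgroup of size $m$, then $M$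 is called an automatically non-standard $f$-subgroup. *)

theory Defs
  imports "HOL-Computational_Algebra.Computational_Algebra"
begin

text \<open>Integer cyclotomic polynomials, defined recursively by
  x^m - 1 = product over all divisors d of m of cyclo d.\<close>
function cyclo :: "nat \<Rightarrow> int poly" where
  "cyclo m = (if m = 0 then 1 else
      (monom 1 m - 1) div prod_list (map cyclo (filter (\<lambda>d. d dvd m) [1..<m])))"
  by auto
termination
  by (relation "measure id") auto

declare cyclo.simps [simp del]

text \<open>phi_{p,m}: the m-th cyclotomic polynomial mapped into the field (reduced mod p).\<close>
definition cyclo_field :: "nat \<Rightarrow> 'a::field poly" where
  "cyclo_field m = map_poly of_int (cyclo m)"

definition f_sequence :: "'a::comm_ring_1 poly \<Rightarrow> (int \<Rightarrow> 'a) \<Rightarrow> bool" where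
  "f_sequence f s \<longleftrightarrow> (\<forall>n::int. (\<Sum>i\<le>degree f. coeff f i * s (n + int i)) = 0)"

definition is_period :: "(int \<Rightarrow> 'a) \<Rightarrow> nat \<Rightarrow> bool" where
  "is_period s k \<longleftrightarrow> k > 0 \<and> (\<forall>n. s (n + int k) = s n)"

definition smallest_period :: "(int \<Rightarrow> 'a) \<Rightarrow> nat \<Rightarrow> bool" where
  "smallest_period s k \<longleftrightarrow> is_period s k \<and> (\<forall>j. 0 < j \<and> j < k \<longrightarrow> \<not> is_period s j)"

definition presents :: "(int \<Rightarrow> 'a) \<Rightarrow> 'a set \<Rightarrow> bool" where
  "presents s M \<longleftrightarrow> finite M \<and> smallest_period s (card M) \<and> M = s ` {0..<int (card M)}"

definition mult_subgroup :: "'a::field set \<Rightarrow> bool" where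
  "mult_subgroup M \<longleftrightarrow> 0 \<notin> M \<and> 1 \<in> M \<and> (\<forall>x\<in>M. \<forall>y\<in>M. x * y \<in> M)
     \<and> (\<forall>x\<in>M. inverse x \<in> M)"

end

theory Submission
  imports Defs
begin

abbreviation ip :: "int poly \<Rightarrow> 'b::comm_ring_1 poly" where "ip \<equiv> map_poly of_int"

lemma ip_add: "ip (p + q) = (ip p + ip q :: 'b::comm_ring_1 poly)"
  by (rule poly_eqI) (simp add: coeff_map_poly)
lemma ip_diff: "ip (p - q) = (ip p - ip q :: 'b::comm_ring_1 poly)"
  by (rule poly_eqI) (simp add: coeff_map_poly)
lemma ip_mult: "ip (p * q) = (ip p * ip q :: 'b::comm_ring_1 poly)"
  by (rule poly_eqI) (simp add: coeff_map_poly coeff_mult of_int_sum)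
lemma ip_1: "ip 1 = (1 :: 'b::comm_ring_1 poly)" by simp
lemma ip_monom: "ip (monom c n) = (monom (of_int c) n :: 'b::comm_ring_1 poly)"
  by (simp add: map_poly_monom)
lemma ip_prod_list: "ip (prod_list xs) = (prod_list (map ip xs) :: 'b::comm_ring_1 poly)"
  by (induction xs) (simp_all add: ip_mult)
lemma ip_dvd: "p dvd q \<Longrightarrow> (ip p :: 'b::comm_ring_1 poly) dvd ip q"
  by (metis dvd_def ip_mult)
lemma ip_xm1: "ip (monom 1 m - 1) = (monom 1 m - 1 :: 'b::comm_ring_1 poly)"
  by (simp add: ip_diff ip_monom)

lemma complex_order_dvd:
  fixes p :: "complex poly"
  assumes "p \<noteq> 0" "q \<noteq> 0" "\<And>a. order a p \<le> order a q"
  shows "p dvd q"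
  using assms
proof (induction p arbitrary: q rule: poly_root_order_induct)
  case 0 then show ?case by simp
next
  case (no_roots p)
  have "degree p = 0"
    using no_roots(1) fundamental_theorem_of_algebra constant_degree by blast
  then obtain c where "p = [:c:]" by (meson degree_eq_zeroE)
  with no_roots show ?case by (simp add: const_poly_dvd_iff dvd_field_iff)
next
  case (root p x n)
  have pn: "p \<noteq> 0" using root by auto
  have o1: "order x ([:-x, 1:] ^ n * p) = n + order x p"
    using pn by (subst order_mult) (auto simp: order_power_n_n)
  have "n \<le> order x q" using root(6)[of x] o1 by simp
  then have "[:-x, 1:] ^ n dvd q" using order_divides by blast
  then obtain q' where q': "q = [:-x, 1:] ^ n * q'" by (elim dvdE)
  have q'0: "q' \<noteq> 0" using root(5) q' by auto
  have "order a p \<le> order a q'" for a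
  proof -
    have "order a ([:-x, 1:] ^ n * p) = order a ([:-x, 1:] ^ n) + order a p"
      using pn by (subst order_mult) auto
    moreover have "order a q = order a ([:-x, 1:] ^ n) + order a q'"
      using q' q'0 by (simp add: order_mult)
    ultimately show ?thesis using root(6)[of a] by simp
  qed
  then have "p dvd q'" using root.IH pn q'0 by blast
  then show ?case using q' by (simp add: mult_dvd_mono)
qed

lemma monic_transfer:
  fixes f g :: "int poly"
  assumes lc: "lead_coeff g = 1" and dv: "(ip g :: complex poly) dvd ip f"
  shows "g dvd f"
proof -
  define r where "r = pseudo_mod f g"
  have g0: "g \<noteq> 0" using lc by auto
  obtain a q where aq: "a \<noteq> 0" "smult a f = g * q + r"
    using pseudo_mod(1)[OF g0] r_def by blast
  have rdeg: "r = 0 \<or> degree r < degree g" using pseudo_mod(2)[OF g0] r_def by blast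
  have "r = 0"
  proof (rule ccontr)
    assume r0: "r \<noteq> 0"
    have "r = smult a f - g * q" using aq by simp
    then have "(ip r :: complex poly) = smult (of_int a) (ip f) - ip g * ip q"
      by (simp add: ip_diff ip_mult map_poly_smult)
    moreover have "(ip g :: complex poly) dvd smult (of_int a) (ip f) - ip g * ip q"
      using dv by (simp add: dvd_diff dvd_smult)
    ultimately have d: "(ip g :: complex poly) dvd ip r" by simp
    have "(ip r :: complex poly) \<noteq> 0" using r0 by (simp add: map_poly_eq_0_iff)
    then have "degree (ip g :: complex poly) \<le> degree (ip r :: complex poly)"
      by (rule dvd_imp_degree_le[OF d])
    moreover have "degree (ip g :: complex poly) = degree g" by (rule degree_map_poly) (simp add: lc)
    moreover have "degree (ip r :: complex poly) = degree r" by (rule degree_map_poly) (simp add: r0)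
    ultimately show False using rdeg r0 by simp
  qed
  then have "g dvd smult a f" using aq by simp
  then show ?thesis using dvd_monic[OF lc _ aq(1)] by blast
qed


lemma lc_xm1: "m > 0 \<Longrightarrow> lead_coeff (monom (1::'b::comm_ring_1) m - 1) = 1"
  and deg_xm1: "m > 0 \<Longrightarrow> degree (monom (1::'b::comm_ring_1) m - 1) = m"
proof -
  assume m: "m > 0"
  have d: "degree (monom (1::'b) m - 1) = m"
    using degree_add_eq_left[of "-1" "monom (1::'b) m"] m by (simp add: degree_monom_eq)
  show "degree (monom (1::'b::comm_ring_1) m - 1) = m" by (rule d)
  show "lead_coeff (monom (1::'b::comm_ring_1) m - 1) = 1" using d m by (simp add: coeff_monom)
qed

lemma order_xm1:
  fixes a :: complex
  assumes m: "m > 0"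
  shows "order a (monom 1 m - 1) = (if a ^ m = 1 then 1 else 0)"
proof -
  let ?Q = "monom (1::complex) m - 1"
  have Q0: "?Q \<noteq> 0" using deg_xm1[OF m, where 'b=complex] m by auto
  have pQ: "poly ?Q a = a ^ m - 1" by (simp add: poly_monom)
  show ?thesis
  proof (cases "a ^ m = 1")
    case False
    then have "poly ?Q a \<noteq> 0" unfolding pQ by simp
    then have "order a ?Q = 0" by (rule order_0I)
    then show ?thesis using False by simp
  next
    case True
    then have r: "poly ?Q a = 0" unfolding pQ by simp
    have o: "order a ?Q = Suc (order a (pderiv ?Q))" by (rule order_pderiv[OF Q0 r])
    have a0: "a \<noteq> 0"
    proof
      assume "a = 0"
      then show False using True m by (simp add: power_0_left)
    qed
    have "pderiv ?Q = monom (of_nat m) (m - 1)" by (simp add: pderiv_diff pderiv_monom)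
    then have "poly (pderiv ?Q) a = of_nat m * a ^ (m - 1)" by (simp add: poly_monom)
    then have "poly (pderiv ?Q) a \<noteq> 0" using a0 m by simp
    then have "order a (pderiv ?Q) = 0" by (rule order_0I)
    then show ?thesis using o True by simp
  qed
qed

definition prim :: "nat \<Rightarrow> complex \<Rightarrow> bool" where
  "prim d a \<longleftrightarrow> a ^ d = 1 \<and> (\<forall>k. 0 < k \<and> k < d \<longrightarrow> a ^ k \<noteq> 1)"

lemma prim_unique:
  assumes "prim d a" "prim e a" "0 < d" "0 < e" shows "d = e"
proof (rule ccontr)
  assume "d \<noteq> e"
  then consider "d < e" | "e < d" by linarith
  then show False
  proof cases
    case 1
    have "a ^ d = 1" using assms(1) by (simp add: prim_def)
    moreover have "a ^ d \<noteq> 1" using assms(2) assms(3) 1 unfolding prim_def by blast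
    ultimately show False by simp
  next
    case 2
    have "a ^ e = 1" using assms(2) by (simp add: prim_def)
    moreover have "a ^ e \<noteq> 1" using assms(1) assms(4) 2 unfolding prim_def by blast
    ultimately show False by simp
  qed
qed

lemma prim_exists:
  assumes m: "m > 0" and am: "a ^ m = 1" and np: "\<not> prim m a"
  shows "\<exists>d. d dvd m \<and> 0 < d \<and> d < m \<and> prim d a"
proof -
  obtain k where k: "0 < k" "k < m" "a ^ k = 1" using np am unfolding prim_def by blast
  define d where "d = (LEAST k. 0 < k \<and> a ^ k = 1)"
  have d1: "0 < d \<and> a ^ d = 1" unfolding d_def by (rule LeastI[of _ k]) (use k in blast)
  have d2: "d \<le> j" if "0 < j" "a ^ j = 1" for j unfolding d_def by (rule Least_le) (use that in blast)
  have "d \<le> k" using d2 k by blast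
  have pd: "prim d a" unfolding prim_def
  proof (intro conjI allI impI)
    show "a ^ d = 1" using d1 by blast
    fix j assume "0 < j \<and> j < d"
    then show "a ^ j \<noteq> 1" using d2[of j] by linarith
  qed
  have "a ^ m = a ^ (d * (m div d) + m mod d)" by (simp only: mult_div_mod_eq)
  also have "\<dots> = (a ^ d) ^ (m div d) * a ^ (m mod d)" by (simp only: power_add power_mult)
  finally have "a ^ m = (a ^ d) ^ (m div d) * a ^ (m mod d)" .
  then have amd: "a ^ (m mod d) = 1" using am d1 by simp
  have "m mod d < d" using d1 by simp
  then have "m mod d = 0" using d2[of "m mod d"] amd by linarith
  then have "d dvd m" by (simp add: mod_eq_0_iff_dvd)
  then show ?thesis using pd d1 \<open>d \<le> k\<close> k by (intro exI[of _ d]) auto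
qed

definition pdivs :: "nat \<Rightarrow> nat list" where
  "pdivs m = filter (\<lambda>d. d dvd m) [1..<m]"

lemma set_pdivs: "set (pdivs m) = {d. d dvd m \<and> 0 < d \<and> d < m}"
  unfolding pdivs_def by auto

lemma cyclo_eq: "m > 0 \<Longrightarrow> cyclo m = (monom 1 m - 1) div prod_list (map cyclo (pdivs m))"
  by (subst cyclo.simps) (simp add: pdivs_def)

lemma lc_prod_list: "(\<And>x. x \<in> set xs \<Longrightarrow> lead_coeff (x::int poly) = 1) \<Longrightarrow> lead_coeff (prod_list xs) = 1"
  by (induction xs) (auto simp: lead_coeff_mult)

lemma order_prod_list:
  fixes xs :: "complex poly list"
  shows "(\<And>x. x \<in> set xs \<Longrightarrow> x \<noteq> 0) \<Longrightarrow> order a (prod_list xs) = sum_list (map (order a) xs)"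
proof (induction xs)
  case (Cons x xs)
  then have "x * prod_list xs \<noteq> 0" by (auto simp: prod_list_zero_iff)
  then show ?case using Cons by (simp add: order_mult)
qed simp

lemma count_prim:
  assumes m: "m > 0"
  shows "card {d \<in> set (pdivs m). prim d a} = (if a ^ m = 1 \<and> \<not> prim m a then 1 else 0)"
proof (cases "a ^ m = 1 \<and> \<not> prim m a")
  case True
  then obtain d where d: "d dvd m" "0 < d" "d < m" "prim d a" using prim_exists m by blast
  have E: "{d \<in> set (pdivs m). prim d a} = {d}"
  proof (intro equalityI subsetI)
    fix x assume "x \<in> {d \<in> set (pdivs m). prim d a}"
    then have "prim x a" "0 < x" by (auto simp: set_pdivs)
    then show "x \<in> {d}" using prim_unique[of x a d] d by simp
  next
    fix x assume "x \<in> {d}"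
    then show "x \<in> {d \<in> set (pdivs m). prim d a}" using d by (simp add: set_pdivs)
  qed
  show ?thesis by (subst if_P[OF True]) (simp add: E)
next
  case False
  have "{d \<in> set (pdivs m). prim d a} = {}"
  proof (rule ccontr)
    assume "{d \<in> set (pdivs m). prim d a} \<noteq> {}"
    then obtain d where d: "d dvd m" "0 < d" "d < m" "prim d a" by (auto simp: set_pdivs)
    have ad: "a ^ d = 1" using d(4) by (simp add: prim_def)
    obtain k where "m = d * k" using d(1) by (elim dvdE)
    then have "a ^ m = 1" using ad by (simp add: power_mult)
    moreover have "\<not> prim m a" using d unfolding prim_def by blast
    ultimately show False using False by blast
  qed
  then have c0: "card {d \<in> set (pdivs m). prim d a} = 0" by simp
  show ?thesis by (subst if_not_P[OF False]) (rule c0)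
qed

lemma cyclo_main:
  "m > 0 \<Longrightarrow> lead_coeff (cyclo m) = 1 \<and> cyclo m * prod_list (map cyclo (pdivs m)) = monom 1 m - 1
     \<and> (\<forall>a::complex. order a (ip (cyclo m)) = (if prim m a then 1 else 0))"
proof (induction m rule: less_induct)
  case (less m)
  define P where "P = prod_list (map cyclo (pdivs m))"
  define Q where "Q = (monom 1 m - 1 :: int poly)"
  have IH1: "\<And>d. d \<in> set (pdivs m) \<Longrightarrow> lead_coeff (cyclo d) = 1"
    using less.IH by (simp add: set_pdivs)
  have IH2: "\<And>d a. d \<in> set (pdivs m) \<Longrightarrow> order a (ip (cyclo d) :: complex poly) = (if prim d a then 1 else 0)"
    using less.IH by (simp add: set_pdivs)
  have Pm: "lead_coeff P = 1" unfolding P_def by (rule lc_prod_list) (auto intro: IH1)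
  have ipP: "(ip P :: complex poly) = prod_list (map (\<lambda>d. ip (cyclo d)) (pdivs m))"
    unfolding P_def by (simp add: ip_prod_list o_def)
  have nz: "\<And>d. d \<in> set (pdivs m) \<Longrightarrow> (ip (cyclo d) :: complex poly) \<noteq> 0"
  proof -
    fix d assume "d \<in> set (pdivs m)"
    then have "lead_coeff (cyclo d) = 1" by (rule IH1)
    then have "cyclo d \<noteq> 0" by auto
    then show "(ip (cyclo d) :: complex poly) \<noteq> 0" by (simp add: map_poly_eq_0_iff)
  qed
  have oP: "order a (ip P :: complex poly) = (if a ^ m = 1 \<and> \<not> prim m a then 1 else 0)" for a
  proof -
    have "order a (ip P :: complex poly) = sum_list (map (\<lambda>d. order a (ip (cyclo d) :: complex poly)) (pdivs m))"
      unfolding ipP by (subst order_prod_list) (use nz in \<open>auto simp: o_def\<close>)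
    also have "\<dots> = sum_list (map (\<lambda>d. if prim d a then 1 else 0) (pdivs m))"
      by (rule arg_cong[where f=sum_list], rule map_cong) (simp_all add: IH2)
    also have "\<dots> = (\<Sum>d\<in>set (pdivs m). if prim d a then 1 else 0)"
      by (rule sum_list_distinct_conv_sum_set) (simp add: pdivs_def)
    also have "\<dots> = card {d \<in> set (pdivs m). prim d a}"
      by (simp add: sum.If_cases Int_def)
    also have "\<dots> = (if a ^ m = 1 \<and> \<not> prim m a then 1 else 0)" by (rule count_prim[OF less.prems])
    finally show ?thesis .
  qed
  have ipQ: "(ip Q :: complex poly) = monom 1 m - 1" unfolding Q_def by (rule ip_xm1)
  have Q0: "(ip Q :: complex poly) \<noteq> 0" using deg_xm1[OF less.prems, where 'b=complex] less.prems ipQ by auto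
  have P0: "(ip P :: complex poly) \<noteq> 0"
  proof -
    have "P \<noteq> 0" using Pm by force
    then show ?thesis by (simp add: map_poly_eq_0_iff)
  qed
  have "(ip P :: complex poly) dvd ip Q"
  proof (rule complex_order_dvd[OF P0 Q0])
    fix a :: complex
    show "order a (ip P) \<le> order a (ip Q)"
      unfolding oP ipQ order_xm1[OF less.prems] by (cases "a ^ m = 1") auto
  qed
  then have PQ: "P dvd Q" by (rule monic_transfer[OF Pm])
  have cm: "cyclo m = Q div P" unfolding Q_def P_def using less.prems by (rule cyclo_eq)
  have eq: "cyclo m * P = Q" unfolding cm using PQ by (rule dvd_div_mult_self)
  have lc: "lead_coeff (cyclo m) = 1"
  proof -
    have "lead_coeff Q = lead_coeff (cyclo m) * lead_coeff P" unfolding eq[symmetric] by (rule lead_coeff_mult)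
    moreover have "lead_coeff Q = 1" unfolding Q_def by (rule lc_xm1[OF less.prems])
    ultimately show ?thesis using Pm by (metis mult.right_neutral)
  qed
  have ord: "order a (ip (cyclo m) :: complex poly) = (if prim m a then 1 else 0)" for a
  proof -
    have e2: "(ip (cyclo m) :: complex poly) * ip P = ip Q" by (simp only: ip_mult[symmetric] eq)
    have "order a (ip Q :: complex poly) = order a (ip (cyclo m) :: complex poly) + order a (ip P :: complex poly)"
      using Q0 unfolding e2[symmetric] by (rule order_mult)
    moreover have h1: "order a (ip Q :: complex poly) = (if a^m = 1 then 1 else 0)"
      unfolding ipQ by (rule order_xm1[OF less.prems])
    moreover have "prim m a \<Longrightarrow> a^m = 1" by (simp add: prim_def)
    ultimately show ?thesis using oP[of a] by (cases "prim m a"; cases "a^m = 1") simp_all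
  qed
  have e3: "cyclo m * prod_list (map cyclo (pdivs m)) = monom 1 m - 1" using eq unfolding P_def Q_def .
  have ord': "\<forall>a::complex. order a (ip (cyclo m)) = (if prim m a then 1 else 0)" using ord by (rule allI)
  show ?case using lc e3 ord' by (rule conjI[OF _ conjI])
qed

lemma cyclo_1: "cyclo 1 = [:-1, 1:]"
proof -
  have "cyclo 1 * prod_list (map cyclo (pdivs 1)) = monom 1 1 - 1" using cyclo_main[of 1] by simp
  moreover have "pdivs 1 = []" by (simp add: pdivs_def)
  ultimately show ?thesis by (simp add: monom_Suc monom_0 one_pCons)
qed

lemma cyclo_dvd:
  assumes "m > 1"
  shows "[:-1, 1:] * cyclo m dvd monom 1 m - 1"
proof -
  have "1 \<in> set (pdivs m)" using assms by (simp add: set_pdivs)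
  then have "cyclo 1 dvd prod_list (map cyclo (pdivs m))" by (intro prod_list_dvd) simp
  then have dv: "cyclo 1 * cyclo m dvd cyclo m * prod_list (map cyclo (pdivs m))"
    by (metis mult.commute mult_dvd_mono dvd_refl)
  have eq: "cyclo m * prod_list (map cyclo (pdivs m)) = monom 1 m - 1" using cyclo_main[of m] assms by simp
  show ?thesis using dv unfolding eq cyclo_1 .
qed

definition Vp :: "(int \<Rightarrow> 'a::comm_ring_1) \<Rightarrow> nat \<Rightarrow> nat \<Rightarrow> 'a poly" where
  "Vp t m k = (\<Sum>j<m. monom (t (int k + int j)) (m - 1 - j))"

lemma Vp_shift:
  fixes t :: "int \<Rightarrow> 'a::comm_ring_1"
  assumes m: "m > 0" and per: "\<And>n. t (n + int m) = t n"
  shows "monom 1 1 * Vp t m k = Vp t m (Suc k) + smult (t (int k)) (monom 1 m - 1)"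
proof -
  obtain r where r: "m = Suc r" using m by (cases m) auto
  have "monom 1 1 * Vp t m k = (\<Sum>j<Suc r. monom (t (int k + int j)) (Suc r - j))"
    unfolding Vp_def r sum_distrib_left by (rule sum.cong) (simp_all add: mult_monom Suc_diff_le)
  also have "\<dots> = monom (t (int k)) (Suc r) + (\<Sum>j<r. monom (t (int (Suc k) + int j)) (r - j))"
    by (subst sum.lessThan_Suc_shift) (simp add: algebra_simps)
  finally have L: "monom 1 1 * Vp t m k = monom (t (int k)) (Suc r) + (\<Sum>j<r. monom (t (int (Suc k) + int j)) (r - j))" .
  have "Vp t m (Suc k) = (\<Sum>j<r. monom (t (int (Suc k) + int j)) (r - j)) + monom (t (int (Suc k) + int r)) 0"
    unfolding Vp_def r by (simp add: sum.lessThan_Suc)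
  moreover have "t (int (Suc k) + int r) = t (int k)"
    using per[of "int k"] r by (simp add: algebra_simps)
  ultimately have R: "Vp t m (Suc k) = (\<Sum>j<r. monom (t (int (Suc k) + int j)) (r - j)) + monom (t (int k)) 0"
    by simp
  have "smult (t (int k)) (monom 1 m - 1) = monom (t (int k)) (Suc r) - monom (t (int k)) 0"
    unfolding r by (simp add: smult_diff_right smult_monom monom_0)
  then show ?thesis using L R by simp
qed

lemma Vp_iter:
  fixes t :: "int \<Rightarrow> 'a::comm_ring_1"
  assumes m: "m > 0" and per: "\<And>n. t (n + int m) = t n"
  shows "(monom 1 m - 1) dvd (monom 1 i * Vp t m k - Vp t m (k + i))"
proof (induction i)
  case 0
  then show ?case by (simp add: monom_0)
next
  case (Suc i)
  have "monom 1 (Suc i) * Vp t m k - Vp t m (k + Suc i)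
        = monom 1 1 * (monom 1 i * Vp t m k - Vp t m (k + i))
          + (monom 1 1 * Vp t m (k + i) - Vp t m (Suc (k + i)))"
  proof -
    have mm: "monom (1::'a) (Suc i) = monom 1 1 * monom 1 i" by (simp add: mult_monom)
    show ?thesis unfolding mm by (simp add: algebra_simps)
  qed
  also have "monom 1 1 * Vp t m (k + i) - Vp t m (Suc (k + i)) = smult (t (int (k + i))) (monom 1 m - 1)"
    using Vp_shift[where t=t, OF m per, of "k + i"] by simp
  finally show ?case using Suc.IH by (simp add: dvd_add dvd_mult dvd_smult)
qed

lemma degree_Vp: "m > 0 \<Longrightarrow> degree (Vp t m k) \<le> m - 1"
  unfolding Vp_def by (intro degree_sum_le) (auto intro: order.trans[OF degree_monom_le])

lemma coeff_Vp: "m > 0 \<Longrightarrow> coeff (Vp t m k) (m - 1) = t (int k)"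
proof -
  assume m: "m > 0"
  have "coeff (Vp t m k) (m - 1) = (\<Sum>j<m. if j = 0 then t (int k + int j) else 0)"
    unfolding Vp_def coeff_sum coeff_monom by (rule sum.cong) (use m in auto)
  also have "\<dots> = t (int k)" using m by (simp add: sum.delta)
  finally show ?thesis .
qed

lemma fseq_general:
  fixes s :: "nat \<Rightarrow> 'a::field"
  assumes m: "m > 0"
    and dv: "(monom 1 m - 1) dvd (u * (\<Sum>i<m. monom (s i) (m - 1 - i)))"
  shows "f_sequence u (\<lambda>n::int. s (nat (n mod int m)))"
proof -
  define t where "t = (\<lambda>n::int. s (nat (n mod int m)))"
  define Q where "Q = (monom 1 m - 1 :: 'a poly)"
  define S where "S = (\<Sum>i<m. monom (s i) (m - 1 - i))"
  have per: "\<And>n. t (n + int m) = t n" unfolding t_def by simp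
  have V0: "Vp t m 0 = S" unfolding Vp_def S_def t_def
    by (rule sum.cong) (auto simp: of_nat_mod[symmetric] simp del: of_nat_mod)
  have main: "(\<Sum>i\<le>degree u. coeff u i * t (int k + int i)) = 0" for k
  proof -
    define W where "W = (\<Sum>i\<le>degree u. smult (coeff u i) (Vp t m (k + i)))"
    have "Q dvd u * Vp t m k - W"
    proof -
      have "u * Vp t m k = (\<Sum>i\<le>degree u. monom (coeff u i) i) * Vp t m k"
        by (simp only: poly_as_sum_of_monoms)
      also have "\<dots> = (\<Sum>i\<le>degree u. monom (coeff u i) i * Vp t m k)"
        by (simp add: sum_distrib_right)
      also have "\<dots> = (\<Sum>i\<le>degree u. smult (coeff u i) (monom 1 i * Vp t m k))"
        by (rule sum.cong) (simp_all add: smult_monom_mult)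
      finally have "u * Vp t m k = (\<Sum>i\<le>degree u. smult (coeff u i) (monom 1 i * Vp t m k))" .
      then have "u * Vp t m k - W = (\<Sum>i\<le>degree u. smult (coeff u i) (monom 1 i * Vp t m k - Vp t m (k + i)))"
        unfolding W_def by (simp add: sum_subtractf smult_diff_right)
      also have "Q dvd \<dots>" unfolding Q_def
        by (intro dvd_sum dvd_smult Vp_iter[where t=t, OF m per])
      finally show ?thesis .
    qed
    moreover have "Q dvd u * Vp t m k"
    proof -
      have "Q dvd monom 1 k * Vp t m 0 - Vp t m k" using Vp_iter[where t=t, OF m per, of k 0] unfolding Q_def by simp
      then have d1: "Q dvd u * (monom 1 k * Vp t m 0 - Vp t m k)" by (rule dvd_mult)
      have d2: "Q dvd monom 1 k * (u * Vp t m 0)" using dv unfolding V0 Q_def S_def by (rule dvd_mult)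
      from d2 d1 have "Q dvd monom 1 k * (u * Vp t m 0) - u * (monom 1 k * Vp t m 0 - Vp t m k)"
        by (rule dvd_diff)
      moreover have "monom 1 k * (u * Vp t m 0) - u * (monom 1 k * Vp t m 0 - Vp t m k) = u * Vp t m k"
        by (simp add: algebra_simps)
      ultimately show ?thesis by simp
    qed
    ultimately have "Q dvd u * Vp t m k - (u * Vp t m k - W)" by (simp only: dvd_diff)
    then have QW: "Q dvd W" by simp
    have dW: "degree W \<le> m - 1" unfolding W_def
      by (intro degree_sum_le) (auto intro: order.trans[OF degree_smult_le] degree_Vp[OF m, simplified])
    have W0: "W = 0"
    proof (rule ccontr)
      assume "W \<noteq> 0"
      then have "degree Q \<le> degree W" using QW by (simp add: dvd_imp_degree_le)
      moreover have "degree Q = m" unfolding Q_def by (rule deg_xm1[OF m])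
      ultimately show False using dW m by simp
    qed
    have "coeff W (m - 1) = (\<Sum>i\<le>degree u. coeff u i * t (int k + int i))"
      unfolding W_def coeff_sum coeff_smult coeff_Vp[OF m] by simp
    then show ?thesis using W0 by simp
  qed
  show ?thesis unfolding f_sequence_def
  proof
    fix n :: int
    define k where "k = nat (n mod int m)"
    have tk: "t (int k + int i) = t (n + int i)" for i
    proof -
      have "int k = n mod int m" unfolding k_def using m by simp
      then have "(int k + int i) mod int m = (n + int i) mod int m" by (simp add: mod_add_left_eq)
      then show ?thesis unfolding t_def by simp
    qed
    show "(\<Sum>i\<le>degree u. coeff u i * s (nat ((n + int i) mod int m))) = 0"
      using main[of k] unfolding tk unfolding t_def .
  qed
qed

lemma subgroup_sum_zero:
  fixes M :: "'a::field set"
  assumes sg: "mult_subgroup M" and fin: "finite M" and c: "card M > 1"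
  shows "sum (\<lambda>x. x) M = 0"
proof -
  obtain g where g: "g \<in> M" "g \<noteq> 1"
  proof (rule ccontr)
    assume "\<not> thesis"
    then have "M \<subseteq> {1}" using that by blast
    then have "card M \<le> card {1::'a}" by (intro card_mono) auto
    then have "card M \<le> 1" by simp
    then show False using c by simp
  qed
  have g0: "g \<noteq> 0" using sg g unfolding mult_subgroup_def by blast
  have sub: "(\<lambda>x. g * x) ` M \<subseteq> M" using sg g unfolding mult_subgroup_def by blast
  have inj: "inj_on (\<lambda>x. g * x) M" using g0 by (auto intro: inj_onI)
  have "card ((\<lambda>x. g * x) ` M) = card M" using inj by (rule card_image)
  then have im: "(\<lambda>x. g * x) ` M = M" using card_subset_eq[OF fin sub] by blast
  have "sum (\<lambda>x. x) M = sum (\<lambda>x. x) ((\<lambda>x. g * x) ` M)" by (simp only: im)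
  also have "\<dots> = sum (\<lambda>x. g * x) M" using inj by (simp add: sum.reindex)
  also have "\<dots> = g * sum (\<lambda>x. x) M" by (simp add: sum_distrib_left)
  finally have "(g - 1) * sum (\<lambda>x. x) M = 0" by (simp add: algebra_simps)
  then show ?thesis using g by simp
qed

lemma ip_lin: "ip [:-1, 1:] = ([:-1, 1:] :: 'b::comm_ring_1 poly)"
  by (simp add: map_poly_pCons)

lemma pderiv_xm1_root:
  fixes Q :: "'a::field poly"
  assumes "[:-1, 1:] ^ 2 dvd Q"
  shows "poly (pderiv Q) 1 = 0"
proof -
  obtain k where k: "Q = [:-1, 1:] ^ 2 * k" using assms by (elim dvdE)
  have "Q = [:-1, 1:] * ([:-1, 1:] * k)" unfolding k by (simp only: power2_eq_square mult.assoc)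
  then have "pderiv Q = [:-1, 1:] * pderiv ([:-1, 1:] * k) + ([:-1, 1:] * k) * pderiv [:-1, 1:]"
    by (simp only: pderiv_mult)
  then show ?thesis by simp
qed

theorem mainTheorem7:
  fixes s :: "nat \<Rightarrow> 'a::field_gcd" and M :: "'a set" and m :: nat
  assumes "m > 1"
    and "CHAR('a) > 0 \<Longrightarrow> coprime m CHAR('a)"
    and "mult_subgroup M"
    and "card M = m"
    and "M = s ` {..<m}"
    and "cyclo_field m dvd (\<Sum>i<m. monom (s i) (m - 1 - i))"
  shows "let f = (monom 1 m - 1) div gcd (monom 1 m - 1) (\<Sum>i<m. monom (s i) (m - 1 - i));
             t = (\<lambda>n::int. s (nat (n mod int m)))
         in f_sequence f t \<and> presents t M
            \<and> f dvd (monom 1 m - 1) div ([:-1, 1:] * cyclo_field m)"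
proof -
  note m1 = assms(1) and chr = assms(2) and sg = assms(3) and cM = assms(4) and Ms = assms(5)
    and phidvd = assms(6)
  have m: "m > 0" using m1 by simp
  define Q where "Q = (monom 1 m - 1 :: 'a poly)"
  define S where "S = (\<Sum>i<m. monom (s i) (m - 1 - i))"
  define g where "g = gcd Q S"
  define f where "f = Q div g"
  define t where "t = (\<lambda>n::int. s (nat (n mod int m)))"
  define B where "B = [:-1, 1:] * (cyclo_field m :: 'a poly)"
  have Q0: "Q \<noteq> 0" using deg_xm1[OF m, where 'b='a] m unfolding Q_def by auto
  have finM: "finite M" using Ms by simp
  have inj: "inj_on s {..<m}" using cM Ms by (intro eq_card_imp_inj_on) auto
  have gQ: "g dvd Q" unfolding g_def by simp
  have gS: "g dvd S" unfolding g_def by simp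
  have fg: "f * g = Q" unfolding f_def using gQ by (rule dvd_div_mult_self)
  have fS: "Q dvd f * S"
  proof -
    obtain h where h: "S = g * h" using gS by (elim dvdE)
    have "f * S = Q * h" unfolding h using fg by (simp add: mult.assoc[symmetric])
    then show ?thesis by simp
  qed
  have fs: "f_sequence f t" unfolding t_def by (rule fseq_general[OF m]) (use fS in \<open>simp add: Q_def S_def\<close>)
  have tj: "t (int j) = s j" if "j < m" for j
    unfolding t_def using that by (simp add: of_nat_mod[symmetric] del: of_nat_mod)
  have img: "t ` {0..<int m} = M"
  proof (intro equalityI subsetI)
    fix x assume "x \<in> t ` {0..<int m}"
    then obtain n where n: "0 \<le> n" "n < int m" "x = t n" by auto
    have "x = t (int (nat n))" using n by simp
    also have "\<dots> = s (nat n)" using n by (intro tj) simp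
    finally show "x \<in> M" unfolding Ms using n by auto
  next
    fix x assume "x \<in> M"
    then obtain j where j: "j < m" "x = s j" unfolding Ms by auto
    then have "x = t (int j)" using tj by simp
    then show "x \<in> t ` {0..<int m}" using j by auto
  qed
  have per: "is_period t m" unfolding is_period_def t_def using m by simp
  have minp: "\<not> is_period t j" if "0 < j" "j < m" for j
  proof
    assume "is_period t j"
    then have "t (0 + int j) = t 0" unfolding is_period_def by blast
    then have "s j = s 0" using tj[of j] tj[of 0] that by simp
    then have "j = 0" using inj that by (auto dest: inj_onD)
    then show False using that by simp
  qed
  have pres: "presents t M"
    unfolding presents_def smallest_period_def cM using finM per minp img by blast
  have BQ: "B dvd Q"
  proof -
    have "(ip ([:-1, 1:] * cyclo m) :: 'a poly) dvd ip (monom 1 m - 1)"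
      by (rule ip_dvd[OF cyclo_dvd[OF m1]])
    then show ?thesis unfolding B_def Q_def ip_mult ip_lin ip_xm1 cyclo_field_def .
  qed
  have B0: "B \<noteq> 0" using BQ Q0 by auto
  have phi1: "poly (cyclo_field m :: 'a poly) 1 \<noteq> 0"
  proof
    assume "poly (cyclo_field m :: 'a poly) 1 = 0"
    then have "[:-1, 1:] dvd (cyclo_field m :: 'a poly)" by (simp add: poly_eq_0_iff_dvd)
    then have "[:-1, 1:] ^ 2 dvd B" unfolding B_def power2_eq_square by (rule mult_dvd_mono[OF dvd_refl])
    then have "[:-1, 1:] ^ 2 dvd Q" using BQ by (rule dvd_trans)
    then have "poly (pderiv Q) 1 = 0" by (rule pderiv_xm1_root)
    moreover have "pderiv Q = monom (of_nat m) (m - 1)" unfolding Q_def by (simp add: pderiv_diff pderiv_monom)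
    ultimately have "(of_nat m :: 'a) = 0" by (simp add: poly_monom)
    then have cd: "CHAR('a) dvd m" by (simp add: of_nat_eq_0_iff_char_dvd)
    show False
    proof (cases "CHAR('a) = 0")
      case True
      then show False using cd m by simp
    next
      case False
      then have "coprime m CHAR('a)" using chr by simp
      then have "is_unit CHAR('a)" using cd by (intro coprime_common_divisor[of m "CHAR('a)"]) auto
      then have "CHAR('a) = 1" by simp
      then have "(of_nat 1 :: 'a) = 0" using of_nat_CHAR[where 'a='a] by simp
      then show False by simp
    qed
  qed
  have BS: "B dvd S"
  proof -
    obtain k where k: "S = cyclo_field m * k" using phidvd unfolding S_def by (elim dvdE)
    have "poly S 1 = (\<Sum>i<m. s i)" unfolding S_def by (simp add: poly_sum poly_monom)
    also have "\<dots> = sum (\<lambda>x. x) M" unfolding Ms using inj by (simp add: sum.reindex)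
    also have "\<dots> = 0" using subgroup_sum_zero[OF sg finM] cM m1 by simp
    finally have "poly S 1 = 0" .
    then have "poly k 1 = 0" using phi1 unfolding k by simp
    then have "[:-1, 1:] dvd k" by (simp add: poly_eq_0_iff_dvd)
    then show ?thesis unfolding B_def k by (subst mult.commute[of _ k]) (rule mult_dvd_mono[OF _ dvd_refl])
  qed
  have Bg: "B dvd g" unfolding g_def using BQ BS by (rule gcd_greatest)
  obtain e where e: "g = B * e" using Bg by (elim dvdE)
  have "Q div B = e * f"
  proof -
    have "Q = B * (e * f)" using fg e by (simp add: mult_ac)
    then show ?thesis using B0 by simp
  qed
  then have fdv: "f dvd Q div B" by simp
  show ?thesis
    unfolding Let_def using fs pres fdv unfolding f_def g_def Q_def S_def t_def B_def by blast
qed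

end
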